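(* Let $(v_i)_{i\in N}$ be a typical profile, let all agents report truthfully ($\hat v_i=v_i$), and let $b$ and $x$ be the bids and fractional allocation computed by the PRD Mechanism. Then for all agents $i\neq k$, $$fEM_{ik}:=\sum_{j\in M}\bar v_{ij}\,(x_{ij}-x_{kj})=\frac{1}{nC}\sum_{j\in M}\bar v_{ij}\big(\log b_{ij}-\log b_{kj}\big)\;\ge\;\frac{\delta^2}{4nC},$$ where $\bar v_{ij}=v_{ij}/\sum_{j'}v_{ij'}$.
   Context: Setting (random model). There are $n$ agents $N=\{1,\dots,n\}$ and $m$ items $M=\{1,\dots,m\}$. Agent $i$ has an additive valuation given by a vector $v_i\in[0,1]^m$, so $v_i(S)=\sum_{j\in S}v_{ij}$. For each item $j$, the vector $(v_{1j},\dots,v_{nj})$ is drawn from a joint distribution $\mathcal D$ on $[0,1]^n$, independently across items (values of different agents for the same item may be correlated). Let $\mu_i$ be the mean of the marginal distribution of agent $i$. Standing assumptions: there are constants $\mu_l>0$ and $\delta\in(0,1)$, independent of $n$ and $m$, such that $\mu_i\ge \mu_l$ for all $i$, and $\mathbb E\big[\,|v_{ij}/\mu_i-v_{kj}/\mu_k|\,\big]\ge\delta$ for all $i\ne k$. Typicality: for a fixed constant $\varepsilon\in(0,\delta/25)$, a profile $(v_i)_{i\in N}$ is typical if (T1) for all $i$, $\sum_j v_{ij}\in[(1-\varepsilon)m\mu_i,(1+\varepsilon)m\mu_i]$, and (T2) for all $i\neq k$, $\sum_j |v_{ij}/\mu_i-v_{kj}/\mu_k|\ge(1-\varepsilon)\delta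 m$. PRD Mechanism. Parameters: $l:=\delta/25$, $b_{\min}:=l/m$, $b_{\max}:=2/(\mu_l m)$, $c:=-\log(l/m)$, $C:=\log\big(2/(\mu_l l)\big)$ (natural logarithms). Each agent $i$ reports a vector $\hat v_i\in[0,1]^m$ with $\sum_j\hat v_{ij}>0$. Bid construction: let $\bar v_{ij}:=\hat v_{ij}/\sum_{j'}\hat v_{ij'}$; for $s\ge 0$ let $b_{ij}(s):=\min\{\max\{s\bar v_{ij},b_{\min}\},b_{\max}\}$ and $h_i(s):=\sum_j b_{ij}(s)$ (a continuous nondecreasing function with $h_i(0)=l<1$). If $\sup_{s\ge0}h_i(s)\ge1$, pick $s_i\ge0$ with $h_i(s_i)=1$ (a scale factor) and set $b_{ij}:=b_{ij}(s_i)$. Otherwise set $b_{ij}:=b_{\max}$ for every $j$ with $\hat v_{ij}>0$ and choose the remaining $b_{ij}\in[b_{\min},b_{\max}]$ arbitrarily so that $\sum_j b_{ij}=1$. Fractional allocation: $x_{ij}:=\frac{\log b_{ij}+c}{nC}+\frac{nC-\sum_{k\in N}(\log b_{kj}+c)}{n^2C}$ (so $x_{ij}\in[0,1]$ and $\sum_i x_{ij}=1$). Rounding: each item $j$ is independently assigned to exactly one agent, to agent $i$ with probability $x_{ij}$; $A_i$ denotes the set of items agent $i$ receives. *)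

theory Defs
  imports "HOL-Probability.Probability"
begin

text \<open>Agents are indexed by {..<n}, items by {..<m}. A profile / bid vector is a
  function nat => nat => real, agent first, item second.\<close>

text \<open>Mean of agent i's marginal under the joint per-item distribution D on [0,1]^n.\<close>
definition agent_mean :: "(nat \<Rightarrow> real) measure \<Rightarrow> nat \<Rightarrow> real" where
  "agent_mean D i = integral\<^sup>L D (\<lambda>\<omega>. \<omega> i)"

definition standing_assumptions ::
  "nat \<Rightarrow> (nat \<Rightarrow> real) measure \<Rightarrow> real \<Rightarrow> real \<Rightarrow> bool" where
  "standing_assumptions n D \<mu>l \<delta> \<longleftrightarrow>
     prob_space D \<and>
     (\<forall>i<n. (\<lambda>\<omega>. \<omega> i) \<in> borel_measurable D) \<and>
     (\<forall>\<omega>\<in>space D. \<forall>i<n. 0 \<le> \<omega> i \<and> \<omega> i \<le> 1) \<and>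
     0 < \<mu>l \<and> 0 < \<delta> \<and> \<delta> < 1 \<and>
     (\<forall>i<n. agent_mean D i \<ge> \<mu>l) \<and>
     (\<forall>i<n. \<forall>k<n. i \<noteq> k \<longrightarrow>
        integral\<^sup>L D (\<lambda>\<omega>. \<bar>\<omega> i / agent_mean D i - \<omega> k / agent_mean D k\<bar>) \<ge> \<delta>)"

definition typical ::
  "nat \<Rightarrow> nat \<Rightarrow> (nat \<Rightarrow> real) \<Rightarrow> real \<Rightarrow> real \<Rightarrow> (nat \<Rightarrow> nat \<Rightarrow> real) \<Rightarrow> bool" where
  "typical n m \<mu> \<delta> \<epsilon> v \<longleftrightarrow>
     (\<forall>i<n. (1 - \<epsilon>) * m * \<mu> i \<le> (\<Sum>j<m. v i j) \<and> (\<Sum>j<m. v i j) \<le> (1 + \<epsilon>) * m * \<mu> i) \<and>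
     (\<forall>i<n. \<forall>k<n. i \<noteq> k \<longrightarrow>
        (\<Sum>j<m. \<bar>v i j / \<mu> i - v k j / \<mu> k\<bar>) \<ge> (1 - \<epsilon>) * \<delta> * m)"

definition prd_l :: "real \<Rightarrow> real" where "prd_l \<delta> = \<delta> / 25"
definition prd_bmin :: "real \<Rightarrow> nat \<Rightarrow> real" where "prd_bmin \<delta> m = prd_l \<delta> / m"
definition prd_bmax :: "real \<Rightarrow> nat \<Rightarrow> real" where "prd_bmax \<mu>l m = 2 / (\<mu>l * m)"
definition prd_c :: "real \<Rightarrow> nat \<Rightarrow> real" where "prd_c \<delta> m = - ln (prd_l \<delta> / m)"
definition prd_C :: "real \<Rightarrow> real \<Rightarrow> real" where "prd_C \<delta> \<mu>l = ln (2 / (\<mu>l * prd_l \<delta>))"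

definition vbar :: "nat \<Rightarrow> (nat \<Rightarrow> nat \<Rightarrow> real) \<Rightarrow> nat \<Rightarrow> nat \<Rightarrow> real" where
  "vbar m v i j = v i j / (\<Sum>j'<m. v i j')"

definition bid_at :: "nat \<Rightarrow> real \<Rightarrow> real \<Rightarrow> (nat \<Rightarrow> nat \<Rightarrow> real) \<Rightarrow> nat \<Rightarrow> real \<Rightarrow> nat \<Rightarrow> real" where
  "bid_at m \<delta> \<mu>l v i s j = min (max (s * vbar m v i j) (prd_bmin \<delta> m)) (prd_bmax \<mu>l m)"

definition h_fun :: "nat \<Rightarrow> real \<Rightarrow> real \<Rightarrow> (nat \<Rightarrow> nat \<Rightarrow> real) \<Rightarrow> nat \<Rightarrow> real \<Rightarrow> real" where
  "h_fun m \<delta> \<mu>l v i s = (\<Sum>j<m. bid_at m \<delta> \<mu>l v i s j)"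

text \<open>b is a possible bid vector computed by the PRD Mechanism on reports v
  (covering every admissible choice of scale factor / arbitrary completion).\<close>
definition prd_bids ::
  "nat \<Rightarrow> nat \<Rightarrow> real \<Rightarrow> real \<Rightarrow> (nat \<Rightarrow> nat \<Rightarrow> real) \<Rightarrow> (nat \<Rightarrow> nat \<Rightarrow> real) \<Rightarrow> bool" where
  "prd_bids n m \<delta> \<mu>l v b \<longleftrightarrow>
     (\<forall>i<n.
       (if (SUP s\<in>{0..}. h_fun m \<delta> \<mu>l v i s) \<ge> 1
        then (\<exists>s\<ge>0. h_fun m \<delta> \<mu>l v i s = 1 \<and> (\<forall>j<m. b i j = bid_at m \<delta> \<mu>l v i s j))
        else (\<forall>j<m. v i j > 0 \<longrightarrow> b i j = prd_bmax \<mu>l m) \<and>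
             (\<forall>j<m. prd_bmin \<delta> m \<le> b i j \<and> b i j \<le> prd_bmax \<mu>l m) \<and>
             (\<Sum>j<m. b i j) = 1))"

definition prd_alloc ::
  "nat \<Rightarrow> nat \<Rightarrow> real \<Rightarrow> real \<Rightarrow> (nat \<Rightarrow> nat \<Rightarrow> real) \<Rightarrow> nat \<Rightarrow> nat \<Rightarrow> real" where
  "prd_alloc n m \<delta> \<mu>l b i j =
     (ln (b i j) + prd_c \<delta> m) / (n * prd_C \<delta> \<mu>l)
     + (n * prd_C \<delta> \<mu>l - (\<Sum>k<n. ln (b k j) + prd_c \<delta> m)) / (n^2 * prd_C \<delta> \<mu>l)"

end

theory Submission
  imports Defs
begin


lemma binary_pinsker:
  fixes p q :: real
  assumes q0: "0 < q" and qp: "q \<le> p" and p1: "p < 1"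
  shows "2 * (p - q)^2 \<le> p * ln (p / q) + (1 - p) * ln ((1 - p) / (1 - q))"
proof -
  define g where "g x = p * (ln p - ln x) + (1 - p) * (ln (1 - p) - ln (1 - x)) - 2 * (p - x)^2" for x
  define g' where "g' x = - p / x + (1 - p) / (1 - x) + 4 * (p - x)" for x
  have der: "(g has_real_derivative g' x) (at x)" if "x \<in> {q..p}" for x
  proof -
    have x0: "0 < x" "x < 1" using that q0 p1 by auto
    show ?thesis unfolding g_def g'_def
      using x0 by (auto intro!: derivative_eq_intros)
  qed
  have nonpos: "g' x \<le> 0" if "x \<in> {q..p}" for x
  proof -
    have x0: "0 < x" "x < 1" "x \<le> p" using that q0 p1 by auto
    have e: "g' x = (p - x) * (4 - 1 / (x * (1 - x)))"
      unfolding g'_def using x0 by (simp add: field_simps)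
    have "0 \<le> (x - 1/2)^2" by simp
    then have "x * (1 - x) \<le> 1/4" by (simp add: power2_eq_square field_simps)
    moreover have "0 < x * (1 - x)" using x0 by simp
    ultimately have "4 \<le> 1 / (x * (1 - x))" by (simp add: field_simps)
    then show ?thesis unfolding e using x0 by (simp add: mult_nonneg_nonpos)
  qed
  have "g p \<le> g q" by (rule deriv_nonpos_imp_antimono[OF der nonpos qp])
  moreover have "g p = 0" unfolding g_def by simp
  moreover have "g q = p * ln (p / q) + (1 - p) * ln ((1 - p) / (1 - q)) - 2 * (p - q)^2"
    unfolding g_def using q0 qp p1 by (simp add: ln_div)
  ultimately show ?thesis by simp
qed

lemma log_sum_ineq:
  fixes x y :: "'a \<Rightarrow> real"
  assumes fin: "finite A" and pos: "\<forall>j\<in>A. 0 < x j \<and> 0 < y j"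
  shows "sum x A * ln (sum x A / sum y A) \<le> (\<Sum>j\<in>A. x j * ln (x j / y j))"
proof (cases "A = {}")
  case True then show ?thesis by simp
next
  case False
  define X where "X = sum x A"
  define Y where "Y = sum y A"
  have X0: "0 < X" unfolding X_def using False fin pos by (intro sum_pos) auto
  have Y0: "0 < Y" unfolding Y_def using False fin pos by (intro sum_pos) auto
  have each: "x j - y j * X / Y \<le> x j * ln (x j / y j) - x j * ln (X / Y)" if j: "j \<in> A" for j
  proof -
    have xj: "0 < x j" and yj: "0 < y j" using pos j by auto
    define z where "z = (x j / y j) / (X / Y)"
    have z0: "0 < z" unfolding z_def using xj yj X0 Y0 by simp
    have "ln (1 / z) \<le> 1 / z - 1" using z0 by (intro ln_le_minus_one) simp
    then have lz: "1 - 1 / z \<le> ln z" using z0 by (simp add: ln_div)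
    have "ln z = ln (x j / y j) - ln (X / Y)" unfolding z_def using xj yj X0 Y0 by (simp add: ln_div ln_mult)
    moreover have "x j * (1 - 1 / z) = x j - y j * X / Y" unfolding z_def using xj yj X0 Y0
      by (simp add: field_simps)
    ultimately have "x j - y j * X / Y \<le> x j * (ln (x j / y j) - ln (X / Y))"
      using mult_left_mono[OF lz, of "x j"] xj by simp
    then show ?thesis by (simp add: algebra_simps)
  qed
  have "(\<Sum>j\<in>A. x j - y j * X / Y) \<le> (\<Sum>j\<in>A. x j * ln (x j / y j) - x j * ln (X / Y))"
    using each by (intro sum_mono) auto
  moreover have "(\<Sum>j\<in>A. x j - y j * X / Y) = 0"
    using Y0 by (simp add: sum_subtractf sum_divide_distrib[symmetric] sum_distrib_right[symmetric] X_def[symmetric] Y_def[symmetric])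
  moreover have "(\<Sum>j\<in>A. x j * ln (x j / y j) - x j * ln (X / Y)) = (\<Sum>j\<in>A. x j * ln (x j / y j)) - X * ln (X / Y)"
    by (simp add: sum_subtractf sum_distrib_right[symmetric] X_def)
  ultimately show ?thesis unfolding X_def Y_def by simp
qed

lemma pinsker:
  fixes b c :: "'a \<Rightarrow> real"
  assumes fin: "finite J" and pos: "\<forall>j\<in>J. 0 < b j \<and> 0 < c j"
    and sb: "sum b J = 1" and sc: "sum c J = 1"
  shows "(\<Sum>j\<in>J. \<bar>b j - c j\<bar>)^2 / 2 \<le> (\<Sum>j\<in>J. b j * ln (b j / c j))"
proof -
  define A where "A = {j\<in>J. c j \<le> b j}"
  define B where "B = {j\<in>J. \<not> c j \<le> b j}"
  have JAB: "J = A \<union> B" and dis: "A \<inter> B = {}" unfolding A_def B_def by auto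
  have finA: "finite A" and finB: "finite B" using fin unfolding A_def B_def by auto
  have split: "sum f J = sum f A + sum f B" for f :: "'a \<Rightarrow> real"
    unfolding JAB using finA finB dis by (rule sum.union_disjoint)
  define P where "P = sum b A"
  define Q where "Q = sum c A"
  have bB: "sum b B = 1 - P" using split[of b] sb P_def by simp
  have cB: "sum c B = 1 - Q" using split[of c] sc Q_def by simp
  have TA: "(\<Sum>j\<in>A. \<bar>b j - c j\<bar>) = P - Q"
    unfolding P_def Q_def sum_subtractf[symmetric] by (rule sum.cong) (auto simp: A_def)
  have TB: "(\<Sum>j\<in>B. \<bar>b j - c j\<bar>) = (1 - Q) - (1 - P)"
    unfolding bB[symmetric] cB[symmetric] sum_subtractf[symmetric] by (rule sum.cong) (auto simp: B_def)
  have T: "(\<Sum>j\<in>J. \<bar>b j - c j\<bar>) = 2 * (P - Q)" using split[of "\<lambda>j. \<bar>b j - c j\<bar>"] TA TB by simp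
  have KL: "P * ln (P / Q) + (1 - P) * ln ((1 - P) / (1 - Q)) \<le> (\<Sum>j\<in>J. b j * ln (b j / c j))"
  proof -
    have "P * ln (P / Q) \<le> (\<Sum>j\<in>A. b j * ln (b j / c j))"
      unfolding P_def Q_def using finA pos by (intro log_sum_ineq) (auto simp: A_def)
    moreover have "(1 - P) * ln ((1 - P) / (1 - Q)) \<le> (\<Sum>j\<in>B. b j * ln (b j / c j))"
      unfolding bB[symmetric] cB[symmetric] using finB pos by (intro log_sum_ineq) (auto simp: B_def)
    ultimately show ?thesis using split[of "\<lambda>j. b j * ln (b j / c j)"] by simp
  qed
  have PQ: "Q \<le> P" unfolding P_def Q_def by (intro sum_mono) (auto simp: A_def)
  show ?thesis
  proof (cases "P = Q")
    case True
    have "sum b J * ln (sum b J / sum c J) \<le> (\<Sum>j\<in>J. b j * ln (b j / c j))"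
      using fin pos by (intro log_sum_ineq) auto
    then show ?thesis using T True sb sc by simp
  next
    case False
    then have PQ': "Q < P" using PQ by simp
    have "A \<noteq> {}" using PQ' unfolding P_def Q_def by auto
    then have Q0: "0 < Q" unfolding Q_def using finA pos by (intro sum_pos) (auto simp: A_def)
    have "B \<noteq> {}"
    proof
      assume "B = {}"
      then have "1 - P = 0" "1 - Q = 0" using bB cB by auto
      then show False using False by simp
    qed
    then have "0 < sum b B" using finB pos by (intro sum_pos) (auto simp: B_def)
    then have P1: "P < 1" using bB by simp
    have "2 * (P - Q)^2 \<le> P * ln (P / Q) + (1 - P) * ln ((1 - P) / (1 - Q))"
      using binary_pinsker[OF Q0 PQ P1] .
    moreover have "(2 * (P - Q))^2 / 2 = 2 * (P - Q)^2" by (simp add: power2_eq_square field_simps)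
    ultimately show ?thesis using KL unfolding T by linarith
  qed
qed




lemma item_ineq:
  fixes a s \<beta> M cc :: real
  assumes s0: "0 < s" and a0: "0 \<le> a" and cc1: "min \<beta> M \<le> cc" and cc2: "cc \<le> M"
    and b0: "0 < \<beta>" and M0: "0 < M"
  shows "(min (max (s*a) \<beta>) M / s) * ln (min (max (s*a) \<beta>) M / cc)
         \<le> a * ln (min (max (s*a) \<beta>) M / cc)"
proof -
  define bb where "bb = min (max (s*a) \<beta>) M"
  have bb0: "0 < bb" unfolding bb_def using b0 M0 by simp
  have cc0: "0 < cc" using cc1 b0 M0 by linarith
  consider (U) "\<beta> \<le> s*a" "s*a \<le> M" | (L) "s*a < \<beta>" | (H) "M < s*a" by linarith
  then have main: "bb / s * ln (bb / cc) \<le> a * ln (bb / cc)"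
  proof cases
    case U
    then have "bb = s * a" unfolding bb_def by simp
    then show ?thesis using s0 by simp
  next
    case L
    show ?thesis
    proof (cases "bb = cc")
      case True then show ?thesis by simp
    next
      case False
      have bbe: "bb = min \<beta> M" unfolding bb_def using L by simp
      then have "bb < cc" using cc1 False by simp
      then have bbb: "bb = \<beta>" using bbe cc2 by (auto simp: min_def split: if_splits)
      have "ln (bb / cc) \<le> 0" using \<open>bb < cc\<close> bb0 cc0 by simp
      moreover have "a \<le> bb / s" using L bbb s0 by (simp add: field_simps)
      ultimately show ?thesis using mult_right_mono_neg by blast
    qed
  next
    case H
    then have bbM: "bb = M" unfolding bb_def by simp
    then have "0 \<le> ln (bb / cc)" using cc2 cc0 by simp
    moreover have "bb / s \<le> a" using H bbM s0 by (simp add: field_simps)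
    ultimately show ?thesis using mult_right_mono by blast
  qed
  then show ?thesis unfolding bb_def .
qed

lemma norm_err:
  fixes x :: "nat \<Rightarrow> real" and S mu \<epsilon> :: real and m :: nat
  assumes x0: "\<forall>j<m. 0 \<le> x j" and S: "S = (\<Sum>j<m. x j)" and S0: "0 < S" and mu0: "0 < mu"
    and lo: "(1 - \<epsilon>) * m * mu \<le> S" and hi: "S \<le> (1 + \<epsilon>) * m * mu" and m1: "1 \<le> m"
  shows "(\<Sum>j<m. \<bar>x j / S - x j / (m * mu)\<bar>) \<le> \<epsilon>"
proof -
  have "(\<Sum>j<m. \<bar>x j / S - x j / (m * mu)\<bar>) = (\<Sum>j<m. x j * \<bar>1 / S - 1 / (m * mu)\<bar>)"
  proof (rule sum.cong)
    fix j assume "j \<in> {..<m}"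
    then have xj: "0 \<le> x j" using x0 by simp
    have "x j / S - x j / (m * mu) = x j * (1 / S - 1 / (m * mu))" by (simp add: right_diff_distrib)
    then show "\<bar>x j / S - x j / (m * mu)\<bar> = x j * \<bar>1 / S - 1 / (m * mu)\<bar>"
      using xj by (simp add: abs_mult)
  qed simp
  also have "\<dots> = S * \<bar>1 / S - 1 / (m * mu)\<bar>" unfolding S by (simp add: sum_distrib_right)
  also have "\<dots> = \<bar>1 - S / (m * mu)\<bar>"
  proof -
    have "S * (1 / S - 1 / (m * mu)) = 1 - S / (m * mu)" using S0 by (simp add: right_diff_distrib)
    then show ?thesis using S0 by (metis abs_mult abs_of_pos)
  qed
  also have "\<dots> \<le> \<epsilon>"
  proof -
    have mm: "0 < m * mu" using m1 mu0 by simp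
    have "1 - \<epsilon> \<le> S / (m * mu)" by (subst pos_le_divide_eq[OF mm]) (use lo in \<open>simp add: mult.assoc\<close>)
    moreover have "S / (m * mu) \<le> 1 + \<epsilon>" by (subst pos_divide_le_eq[OF mm]) (use hi in \<open>simp add: mult.assoc\<close>)
    ultimately show ?thesis by linarith
  qed
  finally show ?thesis .
qed




lemma vbar_facts:
  fixes v :: "nat \<Rightarrow> nat \<Rightarrow> real"
  assumes m1: "1 \<le> m" and mul: "0 < \<mu>l" and mu: "\<mu>l \<le> \<mu>i" and eps: "\<epsilon> < 1/2"
    and vb: "\<forall>j<m. 0 \<le> v i j \<and> v i j \<le> 1"
    and S: "(1 - \<epsilon>) * m * \<mu>i \<le> (\<Sum>j<m. v i j)"
  shows "0 < (\<Sum>j<m. v i j)" "\<forall>j<m. 0 \<le> vbar m v i j \<and> vbar m v i j < prd_bmax \<mu>l m"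
    "(\<Sum>j<m. vbar m v i j) = 1"
proof -
  define S where "S = (\<Sum>j<m. v i j)"
  have mpos: "0 < real m" using m1 by simp
  have "0 < (1 - \<epsilon>) * m * \<mu>i" using eps mpos mul mu by simp
  then show S0: "0 < (\<Sum>j<m. v i j)" using S by linarith
  have Sbig: "real m * \<mu>l < 2 * S"
  proof -
    have "real m * \<mu>l \<le> real m * \<mu>i" using mu mpos by simp
    also have "\<dots> < 2 * ((1 - \<epsilon>) * m * \<mu>i)" using eps mpos mul mu by (simp add: algebra_simps)
    also have "\<dots> \<le> 2 * S" using S S_def by simp
    finally show ?thesis .
  qed
  show "\<forall>j<m. 0 \<le> vbar m v i j \<and> vbar m v i j < prd_bmax \<mu>l m"
  proof (intro allI impI conjI)
    fix j assume j: "j < m"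
    show "0 \<le> vbar m v i j" unfolding vbar_def using vb j S0 by simp
    have "vbar m v i j \<le> 1 / S" unfolding vbar_def S_def[symmetric] using vb j S0 S_def
      by (simp add: divide_right_mono)
    also have "1 / S < 2 / (\<mu>l * m)" using Sbig S0 S_def mul mpos by (simp add: field_simps)
    finally show "vbar m v i j < prd_bmax \<mu>l m" unfolding prd_bmax_def .
  qed
  show "(\<Sum>j<m. vbar m v i j) = 1" unfolding vbar_def using S0 by (simp add: sum_divide_distrib[symmetric])
qed

lemma agent_scale:
  fixes v b :: "nat \<Rightarrow> nat \<Rightarrow> real"
  assumes m1: "1 \<le> m" and mul: "0 < \<mu>l" and mu: "\<mu>l \<le> \<mu>i" and eps: "\<epsilon> < 1/2"
    and d0: "0 < \<delta>" and d1: "\<delta> < 1"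
    and vb: "\<forall>j<m. 0 \<le> v i j \<and> v i j \<le> 1"
    and S: "(1 - \<epsilon>) * m * \<mu>i \<le> (\<Sum>j<m. v i j)"
    and bid: "(if (SUP s\<in>{0..}. h_fun m \<delta> \<mu>l v i s) \<ge> 1
        then (\<exists>s\<ge>0. h_fun m \<delta> \<mu>l v i s = 1 \<and> (\<forall>j<m. b i j = bid_at m \<delta> \<mu>l v i s j))
        else (\<forall>j<m. v i j > 0 \<longrightarrow> b i j = prd_bmax \<mu>l m) \<and>
             (\<forall>j<m. prd_bmin \<delta> m \<le> b i j \<and> b i j \<le> prd_bmax \<mu>l m) \<and>
             (\<Sum>j<m. b i j) = 1)"
  shows "\<exists>s. 0 < s \<and> s \<le> 1 \<and> (\<forall>j<m. b i j = bid_at m \<delta> \<mu>l v i s j) \<and> (\<Sum>j<m. b i j) = 1"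
proof -
  note vf = vbar_facts[where v=v and i=i, OF m1 mul mu eps vb S]
  define S where "S = (\<Sum>j<m. v i j)"
  have mpos: "0 < real m" using m1 by simp
  have M0: "0 < prd_bmax \<mu>l m" unfolding prd_bmax_def using mul mpos by simp
  have b0: "0 < prd_bmin \<delta> m" unfolding prd_bmin_def prd_l_def using d0 mpos by simp
  have mb: "real m * prd_bmin \<delta> m < 1" unfolding prd_bmin_def prd_l_def using d1 mpos by simp
  show ?thesis
  proof (cases "(SUP s\<in>{0..}. h_fun m \<delta> \<mu>l v i s) \<ge> 1")
    case False
    with bid have e1: "\<forall>j<m. v i j > 0 \<longrightarrow> b i j = prd_bmax \<mu>l m"
      and e2: "\<forall>j<m. prd_bmin \<delta> m \<le> b i j" and e3: "(\<Sum>j<m. b i j) = 1" by auto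
    have "\<forall>j\<in>{..<m}. v i j * prd_bmax \<mu>l m \<le> b i j"
    proof
      fix j assume "j \<in> {..<m}"
      then have j: "j < m" by simp
      show "v i j * prd_bmax \<mu>l m \<le> b i j"
      proof (cases "v i j > 0")
        case True
        then show ?thesis using e1 j vb M0 by (simp add: mult_left_le_one_le)
      next
        case False
        then have "v i j = 0" using vb j by force
        then show ?thesis using e2 j b0 by force
      qed
    qed
    then have "S * prd_bmax \<mu>l m \<le> 1" unfolding S_def e3[symmetric] sum_distrib_right by (intro sum_mono) blast
    moreover have "1 < S * prd_bmax \<mu>l m"
    proof -
      have "S * prd_bmax \<mu>l m = 2 * S / (\<mu>l * m)" unfolding prd_bmax_def by simp
      moreover have "\<mu>l * m < 2 * S"
      proof -
        have "\<mu>l * m \<le> \<mu>i * m" using mu mpos by simp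
        also have "\<dots> < 2 * ((1 - \<epsilon>) * m * \<mu>i)" using eps mpos mul mu by (simp add: algebra_simps)
        also have "\<dots> \<le> 2 * S" using S S_def by simp
        finally show ?thesis .
      qed
      moreover have "0 < \<mu>l * m" using mul mpos by simp
      ultimately show ?thesis by (simp add: less_divide_eq_1_pos)
    qed
    ultimately show ?thesis by simp
  next
    case True
    with bid obtain s where s0: "s \<ge> 0" and hs: "h_fun m \<delta> \<mu>l v i s = 1"
      and bs: "\<forall>j<m. b i j = bid_at m \<delta> \<mu>l v i s j" by auto
    have sn0: "s \<noteq> 0"
    proof
      assume "s = 0"
      then have "h_fun m \<delta> \<mu>l v i s \<le> (\<Sum>j<m. prd_bmin \<delta> m)"
        unfolding h_fun_def bid_at_def using b0 by (intro sum_mono) simp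
      then show False using hs mb by simp
    qed
    have s1: "s \<le> 1"
    proof (rule ccontr)
      assume "\<not> s \<le> 1"
      then have s1: "1 < s" by simp
      have ge: "\<forall>j\<in>{..<m}. vbar m v i j \<le> bid_at m \<delta> \<mu>l v i s j"
      proof
        fix j assume "j \<in> {..<m}"
        then have a: "0 \<le> vbar m v i j" "vbar m v i j < prd_bmax \<mu>l m" using vf by auto
        have "vbar m v i j \<le> s * vbar m v i j" using a s1 by (simp add: mult_le_cancel_right1)
        then show "vbar m v i j \<le> bid_at m \<delta> \<mu>l v i s j" unfolding bid_at_def using a by simp
      qed
      have "\<exists>j\<in>{..<m}. 0 < vbar m v i j"
      proof (rule ccontr)
        assume "\<not> ?thesis"
        then have "(\<Sum>j<m. vbar m v i j) \<le> 0" by (intro sum_nonpos) (auto simp: not_less)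
        then show False using vf by simp
      qed
      then obtain j0 where j0: "j0 \<in> {..<m}" "0 < vbar m v i j0" by auto
      have "\<exists>j\<in>{..<m}. vbar m v i j < bid_at m \<delta> \<mu>l v i s j"
      proof
        show "j0 \<in> {..<m}" by fact
        have a: "vbar m v i j0 < prd_bmax \<mu>l m" using vf j0 by auto
        have "vbar m v i j0 < s * vbar m v i j0" using j0 s1 by simp
        then show "vbar m v i j0 < bid_at m \<delta> \<mu>l v i s j0" unfolding bid_at_def using a by simp
      qed
      then have "(\<Sum>j<m. vbar m v i j) < h_fun m \<delta> \<mu>l v i s"
        unfolding h_fun_def using ge by (intro sum_strict_mono_ex1) auto
      then show False using hs vf by simp
    qed
    have "0 < s" using s0 sn0 by simp
    moreover have "(\<Sum>j<m. b i j) = 1" unfolding hs[symmetric] h_fun_def using bs by simp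
    ultimately show ?thesis using s1 bs by blast
  qed
qed




lemma l1_close:
  fixes a bb :: "nat \<Rightarrow> real"
  assumes up: "\<forall>j<m. bb j \<le> a j + \<beta>" and b0: "0 \<le> \<beta>"
    and sa: "(\<Sum>j<m. a j) = 1" and sb: "(\<Sum>j<m. bb j) = 1"
  shows "(\<Sum>j<m. \<bar>a j - bb j\<bar>) \<le> 2 * (m * \<beta>)"
proof -
  have "(\<Sum>j<m. \<bar>a j - bb j\<bar>) = (\<Sum>j<m. 2 * max (bb j - a j) 0 - (bb j - a j))"
    by (intro sum.cong) (auto simp: max_def)
  also have "\<dots> = 2 * (\<Sum>j<m. max (bb j - a j) 0)"
    using sa sb by (simp add: sum_subtractf sum_distrib_left)
  also have "\<dots> \<le> 2 * (\<Sum>j<m. \<beta>)"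
    using up b0 by (intro mult_left_mono sum_mono) auto
  finally show ?thesis by simp
qed

lemma bid_bounds:
  fixes s a \<beta> M :: real
  assumes s0: "0 < s" and s1: "s \<le> 1" and a0: "0 \<le> a" and b0: "0 < \<beta>" and M0: "0 < M"
  shows "0 < min (max (s*a) \<beta>) M" "min (max (s*a) \<beta>) M \<le> a + \<beta>"
    "min \<beta> M \<le> min (max (s*a) \<beta>) M" "min (max (s*a) \<beta>) M \<le> M"
proof -
  show "0 < min (max (s*a) \<beta>) M" using b0 M0 by simp
  have "s * a \<le> a" using mult_right_mono[OF s1 a0] by simp
  then show "min (max (s*a) \<beta>) M \<le> a + \<beta>" using a0 b0 by simp
  show "min \<beta> M \<le> min (max (s*a) \<beta>) M" by (simp add: min_def max_def)
  show "min (max (s*a) \<beta>) M \<le> M" by simp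
qed




theorem mainTheorem4:
  fixes n m :: nat and D :: "(nat \<Rightarrow> real) measure" and \<mu>l \<delta> \<epsilon> :: real
    and v b :: "nat \<Rightarrow> nat \<Rightarrow> real" and i k :: nat
  assumes "m \<ge> 1"
    and "standing_assumptions n D \<mu>l \<delta>"
    and "0 < \<epsilon>" and "\<epsilon> < \<delta> / 25"
    and "\<forall>i<n. \<forall>j<m. 0 \<le> v i j \<and> v i j \<le> 1"
    and "typical n m (agent_mean D) \<delta> \<epsilon> v"
    and "prd_bids n m \<delta> \<mu>l v b"
    and "i < n" and "k < n" and "i \<noteq> k"
  shows "(\<Sum>j<m. vbar m v i j * (prd_alloc n m \<delta> \<mu>l b i j - prd_alloc n m \<delta> \<mu>l b k j))
           = 1 / (n * prd_C \<delta> \<mu>l) * (\<Sum>j<m. vbar m v i j * (ln (b i j) - ln (b k j)))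
       \<and> 1 / (n * prd_C \<delta> \<mu>l) * (\<Sum>j<m. vbar m v i j * (ln (b i j) - ln (b k j)))
           \<ge> \<delta>^2 / (4 * n * prd_C \<delta> \<mu>l)"
proof -
  note m1 = assms(1) and eps0 = assms(3) and epsd = assms(4) and vb = assms(5)
  note ik = assms(8,9,10)
  from assms(2) have mul: "0 < \<mu>l" and d0: "0 < \<delta>" and d1: "\<delta> < 1"
    and mui: "\<forall>i<n. agent_mean D i \<ge> \<mu>l" unfolding standing_assumptions_def by auto
  define \<mu> where "\<mu> = agent_mean D"
  from assms(6) have T1: "\<forall>i<n. (1 - \<epsilon>) * m * \<mu> i \<le> (\<Sum>j<m. v i j) \<and> (\<Sum>j<m. v i j) \<le> (1 + \<epsilon>) * m * \<mu> i"
    and T2: "(\<Sum>j<m. \<bar>v i j / \<mu> i - v k j / \<mu> k\<bar>) \<ge> (1 - \<epsilon>) * \<delta> * m"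
    unfolding typical_def \<mu>_def using ik by auto
  have eps: "\<epsilon> < 1/2" using epsd d1 by simp
  have mpos: "0 < real m" using m1 by simp
  have vbi: "\<forall>j<m. 0 \<le> v i j \<and> v i j \<le> 1" and vbk: "\<forall>j<m. 0 \<le> v k j \<and> v k j \<le> 1" using vb ik by auto
  have mui': "\<mu>l \<le> \<mu> i" and muk': "\<mu>l \<le> \<mu> k" using mui ik \<mu>_def by auto
  have Si: "(1 - \<epsilon>) * m * \<mu> i \<le> (\<Sum>j<m. v i j)" "(\<Sum>j<m. v i j) \<le> (1 + \<epsilon>) * m * \<mu> i"
    using T1 ik by auto
  have Sk: "(1 - \<epsilon>) * m * \<mu> k \<le> (\<Sum>j<m. v k j)" "(\<Sum>j<m. v k j) \<le> (1 + \<epsilon>) * m * \<mu> k"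
    using T1 ik by auto
  obtain s where s0: "0 < s" and s1: "s \<le> 1" and bs: "\<forall>j<m. b i j = bid_at m \<delta> \<mu>l v i s j"
      and hi: "(\<Sum>j<m. b i j) = 1"
    using agent_scale[where v=v and b=b and i=i, OF m1 mul mui' eps d0 d1 vbi Si(1)] assms(7) ik
    unfolding prd_bids_def by blast
  obtain t where t0: "0 < t" and t1: "t \<le> 1" and bt: "\<forall>j<m. b k j = bid_at m \<delta> \<mu>l v k t j"
      and hk: "(\<Sum>j<m. b k j) = 1"
    using agent_scale[where v=v and b=b and i=k, OF m1 mul muk' eps d0 d1 vbk Sk(1)] assms(7) ik
    unfolding prd_bids_def by blast
  note vfi = vbar_facts[where v=v and i=i, OF m1 mul mui' eps vbi Si(1)]
  note vfk = vbar_facts[where v=v and i=k, OF m1 mul muk' eps vbk Sk(1)]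
  define a where "a j = vbar m v i j" for j
  define w where "w j = vbar m v k j" for j
  define \<beta> where "\<beta> = prd_bmin \<delta> m"
  define M where "M = prd_bmax \<mu>l m"
  have M0: "0 < M" unfolding M_def prd_bmax_def using mul mpos by simp
  have b0: "0 < \<beta>" unfolding \<beta>_def prd_bmin_def prd_l_def using d0 mpos by simp
  have mb: "real m * \<beta> = \<delta> / 25" unfolding \<beta>_def prd_bmin_def prd_l_def using mpos by simp
  have a0: "\<forall>j<m. 0 \<le> a j" and w0: "\<forall>j<m. 0 \<le> w j" using vfi vfk a_def w_def by auto
  have sa: "(\<Sum>j<m. a j) = 1" and sw: "(\<Sum>j<m. w j) = 1" using vfi vfk a_def w_def by auto
  have bi: "\<forall>j<m. b i j = min (max (s * a j) \<beta>) M" using bs unfolding bid_at_def a_def \<beta>_def M_def by simp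
  have bk: "\<forall>j<m. b k j = min (max (t * w j) \<beta>) M" using bt unfolding bid_at_def w_def \<beta>_def M_def by simp
  have bbi: "\<forall>j<m. 0 < b i j \<and> b i j \<le> a j + \<beta> \<and> min \<beta> M \<le> b i j \<and> b i j \<le> M"
    using bi bid_bounds[OF s0 s1 _ b0 M0] a0 M0 by simp
  have bbk: "\<forall>j<m. 0 < b k j \<and> b k j \<le> w j + \<beta> \<and> min \<beta> M \<le> b k j \<and> b k j \<le> M"
    using bk bid_bounds[OF t0 t1 _ b0 M0] w0 M0 by simp
  define F where "F = (\<Sum>j<m. vbar m v i j * (ln (b i j) - ln (b k j)))"
  define KL where "KL = (\<Sum>j<m. b i j * ln (b i j / b k j))"
  define T where "T = (\<Sum>j<m. \<bar>b i j - b k j\<bar>)"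
  define d where "d = (\<Sum>j<m. \<bar>a j - w j\<bar>)"
  have F1: "KL / s \<le> F"
  proof -
    have "KL / s = (\<Sum>j<m. (b i j / s) * ln (b i j / b k j))" unfolding KL_def
      by (simp add: sum_divide_distrib)
    also have "\<dots> \<le> (\<Sum>j<m. a j * ln (b i j / b k j))"
    proof (rule sum_mono)
      fix j assume "j \<in> {..<m}"
      then have j: "j < m" by simp
      show "(b i j / s) * ln (b i j / b k j) \<le> a j * ln (b i j / b k j)"
        using item_ineq[OF s0 _ _ _ b0 M0, of "a j" "b k j"] bi bbk a0 j by simp
    qed
    also have "\<dots> = F" unfolding F_def a_def
      using bbi bbk by (intro sum.cong) (auto simp: ln_div)
    finally show ?thesis .
  qed
  have KLT: "T^2 / 2 \<le> KL" unfolding T_def KL_def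
    using bbi bbk hi hk by (intro pinsker) auto
  have KL0: "0 \<le> KL" using KLT by (smt (verit) zero_le_power2 divide_nonneg_nonneg)
  have F2: "KL \<le> F"
  proof -
    have "KL * s \<le> KL" using mult_left_mono[OF s1 KL0] by simp
    then have "KL \<le> KL / s" using s0 by (simp add: le_divide_eq)
    then show ?thesis using F1 by simp
  qed
  have Td: "d - 4 * (\<delta> / 25) \<le> T"
  proof -
    have ci: "(\<Sum>j<m. \<bar>a j - b i j\<bar>) \<le> 2 * (m * \<beta>)"
      using bbi b0 sa hi by (intro l1_close) auto
    have ck: "(\<Sum>j<m. \<bar>w j - b k j\<bar>) \<le> 2 * (m * \<beta>)"
      using bbk b0 sw hk by (intro l1_close) auto
    have "d \<le> (\<Sum>j<m. \<bar>a j - b i j\<bar> + \<bar>b i j - b k j\<bar> + \<bar>w j - b k j\<bar>)"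
      unfolding d_def by (intro sum_mono) auto
    also have "\<dots> = (\<Sum>j<m. \<bar>a j - b i j\<bar>) + T + (\<Sum>j<m. \<bar>w j - b k j\<bar>)"
      unfolding T_def by (simp add: sum.distrib)
    finally show ?thesis using ci ck mb by simp
  qed
  have dd: "(1 - \<epsilon>) * \<delta> - 2 * \<epsilon> \<le> d"
  proof -
    define Si where "Si = (\<Sum>j<m. v i j)"
    define Sk where "Sk = (\<Sum>j<m. v k j)"
    have mi0: "0 < \<mu> i" and mk0: "0 < \<mu> k" using mui' muk' mul by auto
    have ei: "(\<Sum>j<m. \<bar>v i j / Si - v i j / (m * \<mu> i)\<bar>) \<le> \<epsilon>"
      using norm_err[of m "v i" Si "\<mu> i" \<epsilon>] vbi Si vfi mi0 m1 unfolding Si_def by auto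
    have ek: "(\<Sum>j<m. \<bar>v k j / Sk - v k j / (m * \<mu> k)\<bar>) \<le> \<epsilon>"
      using norm_err[of m "v k" Sk "\<mu> k" \<epsilon>] vbk Sk vfk mk0 m1 unfolding Sk_def by auto
    have "(1 - \<epsilon>) * \<delta> * m \<le> (\<Sum>j<m. \<bar>v i j / \<mu> i - v k j / \<mu> k\<bar>)" using T2 .
    also have "\<dots> = m * (\<Sum>j<m. \<bar>v i j / (m * \<mu> i) - v k j / (m * \<mu> k)\<bar>)"
    proof -
      have "\<bar>v i j / \<mu> i - v k j / \<mu> k\<bar> = m * \<bar>v i j / (m * \<mu> i) - v k j / (m * \<mu> k)\<bar>" for j
      proof -
        have "v i j / \<mu> i - v k j / \<mu> k = m * (v i j / (m * \<mu> i) - v k j / (m * \<mu> k))"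
          using mpos mi0 mk0 by (simp add: field_simps)
        then show ?thesis using mpos by (simp add: abs_mult)
      qed
      then show ?thesis by (simp add: sum_distrib_left)
    qed
    finally have X: "(1 - \<epsilon>) * \<delta> \<le> (\<Sum>j<m. \<bar>v i j / (m * \<mu> i) - v k j / (m * \<mu> k)\<bar>)"
      using mpos by (simp add: mult.commute)
    have "(\<Sum>j<m. \<bar>v i j / (m * \<mu> i) - v k j / (m * \<mu> k)\<bar>)
        \<le> (\<Sum>j<m. \<bar>v i j / Si - v i j / (m * \<mu> i)\<bar> + \<bar>a j - w j\<bar> + \<bar>v k j / Sk - v k j / (m * \<mu> k)\<bar>)"
    proof (rule sum_mono)
      have tri: "\<bar>x - z\<bar> \<le> \<bar>p - x\<bar> + \<bar>p - q\<bar> + \<bar>q - z\<bar>" for x z p q :: real by arith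
      fix j show "\<bar>v i j / (m * \<mu> i) - v k j / (m * \<mu> k)\<bar>
        \<le> \<bar>v i j / Si - v i j / (m * \<mu> i)\<bar> + \<bar>a j - w j\<bar> + \<bar>v k j / Sk - v k j / (m * \<mu> k)\<bar>"
        unfolding a_def w_def vbar_def Si_def Sk_def by (rule tri)
    qed
    also have "\<dots> = (\<Sum>j<m. \<bar>v i j / Si - v i j / (m * \<mu> i)\<bar>) + d + (\<Sum>j<m. \<bar>v k j / Sk - v k j / (m * \<mu> k)\<bar>)"
      unfolding d_def by (simp add: sum.distrib)
    finally show ?thesis using X ei ek by simp
  qed
  have T18: "18 * \<delta> / 25 \<le> T"
  proof -
    have "\<epsilon> * \<delta> \<le> \<epsilon>" using mult_left_mono[of \<delta> 1 \<epsilon>] eps0 d1 by simp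
    then show ?thesis using Td dd epsd by (simp add: algebra_simps)
  qed
  have Fb: "\<delta>^2 / 4 \<le> F"
  proof -
    have "(18 * \<delta> / 25)^2 \<le> T^2" using T18 d0 by (intro power_mono) auto
    then have "(18 * \<delta> / 25)^2 / 2 \<le> KL" using KLT by simp
    moreover have "\<delta>^2 / 4 \<le> (18 * \<delta> / 25)^2 / 2" by (simp add: power2_eq_square)
    ultimately show ?thesis using F2 by simp
  qed
  have n0: "0 < real n" using ik by simp
  have C0: "0 < prd_C \<delta> \<mu>l"
  proof -
    have "(\<Sum>j<m. v i j) \<le> (\<Sum>j<m. (1::real))" using vbi by (intro sum_mono) auto
    then have "(1 - \<epsilon>) * m * \<mu> i \<le> m" using Si by simp
    then have "(1 - \<epsilon>) * \<mu> i \<le> 1" using mpos by (simp add: mult.commute mult.left_commute)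
    moreover have "(1/2) * \<mu> i \<le> (1 - \<epsilon>) * \<mu> i" using mult_right_mono[of "1/2" "1 - \<epsilon>" "\<mu> i"] eps mui' mul by simp
    ultimately have "\<mu> i \<le> 2" by simp
    then have "\<mu>l \<le> 2" using mui' by simp
    then have "\<mu>l * (\<delta> / 25) \<le> 2 * (1 / 25)" using d1 d0 mul by (intro mult_mono) auto
    then have "\<mu>l * (\<delta> / 25) < 2" by simp
    moreover have "0 < \<mu>l * (\<delta> / 25)" using mul d0 by simp
    ultimately have "1 < 2 / (\<mu>l * (\<delta> / 25))" by (simp add: less_divide_eq_1_pos)
    then show ?thesis unfolding prd_C_def prd_l_def by (rule ln_gt_zero)
  qed
  have nC: "0 < n * prd_C \<delta> \<mu>l" using n0 C0 by simp
  have eq: "(\<Sum>j<m. vbar m v i j * (prd_alloc n m \<delta> \<mu>l b i j - prd_alloc n m \<delta> \<mu>l b k j)) = 1 / (n * prd_C \<delta> \<mu>l) * F"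
  proof -
    have "prd_alloc n m \<delta> \<mu>l b i j - prd_alloc n m \<delta> \<mu>l b k j = (ln (b i j) - ln (b k j)) / (n * prd_C \<delta> \<mu>l)" for j
      unfolding prd_alloc_def by (simp add: diff_divide_distrib add_divide_distrib)
    then show ?thesis unfolding F_def by (simp add: sum_distrib_left)
  qed
  have ineq: "\<delta>^2 / (4 * n * prd_C \<delta> \<mu>l) \<le> 1 / (n * prd_C \<delta> \<mu>l) * F"
  proof -
    have "\<delta>^2 / (4 * n * prd_C \<delta> \<mu>l) = 1 / (n * prd_C \<delta> \<mu>l) * (\<delta>^2 / 4)" by simp
    also have "\<dots> \<le> 1 / (n * prd_C \<delta> \<mu>l) * F" using Fb nC by (intro mult_left_mono) auto
    finally show ?thesis .
  qed
  show ?thesis using eq ineq unfolding F_def by simp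
qed


end
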